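(* Let $h$ be a positive integer and let $S_1,\ldots,S_n$ be sets of positive integers. For each $i$ let $G_{S_i}$ denote the $\mathcal{G}$-value sequence of $\mathrm{Subtraction}(S_i)$, and suppose that there exist sequences $a_1,\ldots,a_n$ of non-negative integers such that, for every $i$, $G_{S_i}$ is the $h$-stair of $a_i$, i.e. $G_{S_i}(xh+r)=a_i(x)h+r$ for all integers $x\ge 0$ and all $r\in\{0,1,\ldots,h-1\}$. Then for every position $(x_1,\ldots,x_n)$ of the generalized cyclic Nimhoff $\mathrm{GCN}(h;S_1,\ldots,S_n)$, $$\mathcal{G}(x_1,\ldots,x_n)=\left(\bigoplus_{i=1}^n\left\lfloor \frac{G_{S_i}(x_i)}{h}\right\rfloor\right)h+\left(\sum_{i=1}^n x_i\right)\bmod h.$$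
   Context: All games are impartial two-player games under the normal play rule (the player making the last move wins). For a finite set $T\subset\mathbb{N}_0$, $\mathrm{mex}\,T=\min(\mathbb{N}_0\setminus T)$. The $\mathcal{G}$-value (Grundy value) of a position $G$ is defined recursively by $\mathcal{G}(G)=\mathrm{mex}\{\mathcal{G}(G')\mid G\to G'\}$, where $G\to G'$ means $G'$ is reachable from $G$ in one move. The nim-sum $m_1\oplus\cdots\oplus m_n$ of non-negative integers is binary addition without carry (bitwise XOR). For a set $S$ of positive integers, $\mathrm{Subtraction}(S)$ is the game played on a single heap of $x\ge 0$ tokens, where a move takes a heap of $x$ tokens to a heap of $x-s$ tokens for some $s\in S$ with $s\le x$; its $\mathcal{G}$-value sequence is $G_S(x)$, the $\mathcal{G}$-value of a heap of $x$ tokens, $x=0,1,2,\ldots$. The generalized cyclic Nimhoff $\mathrm{GCN}(h;S_1,\ldots,S_n)$ has as positions the $n$-tuples $(x_1,\ldots,x_n)$ of non-negative integers; from $(x_1,\ldots,x_n)$ the legal moves go to any $n$-tuple of non-negative integers of one of the following forms: (i) $(x_1,\ldots,x_i-s_i,\ldots,x_n)$ for some $i$ and some $s_i\in S_i$ (only coordinate $i$ changed); or (ii) $(x_1-s_1,\ldots,x_n-s_n)$ where $s_1,\ldots,s_n$ are non-negative integers with $0<\sum_{i=1}^n s_i<h$. *)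

theory Defs
  imports Main
begin

definition mex :: "nat set \<Rightarrow> nat" where
  "mex T = (LEAST m. m \<notin> T)"

text \<open>Grundy value of a position of a game given by a move relation
  M p q  (p \<rightarrow> q), defined by well-founded recursion on the
  converse of the move relation (meaningful when no infinite play exists).\<close>
definition grundy :: "('a \<Rightarrow> 'a \<Rightarrow> bool) \<Rightarrow> 'a \<Rightarrow> nat" where
  "grundy M = wfrec {(q, p). M p q} (\<lambda>g p. mex (g ` {q. M p q}))"

definition sub_move :: "nat set \<Rightarrow> nat \<Rightarrow> nat \<Rightarrow> bool" where
  "sub_move S x y \<longleftrightarrow> (\<exists>s\<in>S. s \<le> x \<and> y = x - s)"

definition G_sub :: "nat set \<Rightarrow> nat \<Rightarrow> nat" where
  "G_sub S = grundy (sub_move S)"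

text \<open>Generalized cyclic Nimhoff GCN(h; S_1,...,S_n); positions are lists of
  length n, Ss is the list [S_1,...,S_n].\<close>
definition gcn_move :: "nat \<Rightarrow> nat set list \<Rightarrow> nat list \<Rightarrow> nat list \<Rightarrow> bool" where
  "gcn_move h Ss xs ys \<longleftrightarrow> length ys = length xs \<and>
     ((\<exists>i < length xs. \<exists>s \<in> Ss ! i. s \<le> xs ! i \<and> ys = xs[i := xs ! i - s]) \<or>
      (\<exists>ss. length ss = length xs \<and> (\<forall>i < length xs. ss ! i \<le> xs ! i) \<and>
            0 < sum_list ss \<and> sum_list ss < h \<and> ys = map2 (-) xs ss))"

definition nimsum :: "nat list \<Rightarrow> nat" where
  "nimsum xs = foldr (\<lambda>a b. Bit_Operations.xor a b) xs 0"

end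

theory Submission imports Defs begin
unbundle bit_operations_syntax

lemma grundy_unfold:
  assumes "wf {(q, p). M p q}"
  shows "grundy M p = mex (grundy M ` {q. M p q})"
proof -
  have "grundy M p = mex (cut (grundy M) {(q, p). M p q} p ` {q. M p q})"
    unfolding grundy_def by (subst wfrec[OF assms]) simp
  also have "cut (grundy M) {(q, p). M p q} p ` {q. M p q} = grundy M ` {q. M p q}"
    by (auto simp: cut_apply intro!: image_cong)
  finally show ?thesis .
qed

lemma mex_notin: "finite T \<Longrightarrow> mex T \<notin> T"
  unfolding mex_def by (rule LeastI_ex) (meson ex_new_if_finite infinite_UNIV_nat)

lemma mex_less: "v < mex T \<Longrightarrow> v \<in> T"
  unfolding mex_def using not_less_Least by blast

lemma mex_eq: "m \<notin> T \<Longrightarrow> (\<And>v. v < m \<Longrightarrow> v \<in> T) \<Longrightarrow> mex T = m"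
  unfolding mex_def by (rule Least_equality) (auto simp: not_less[symmetric])

lemma wf_sub: "\<forall>s\<in>S. 0 < s \<Longrightarrow> wf {(q, p). sub_move S p q}"
  by (rule wf_subset[OF wf_measure[of id]]) (auto simp: sub_move_def)

lemma G_sub_props:
  assumes "\<forall>s\<in>S. 0 < s"
  shows "sub_move S x y \<Longrightarrow> G_sub S y \<noteq> G_sub S x"
    and "v < G_sub S x \<Longrightarrow> \<exists>y. sub_move S x y \<and> G_sub S y = v"
proof -
  have fin: "finite {y. sub_move S x y}"
    by (rule finite_subset[of _ "{..x}"]) (auto simp: sub_move_def)
  have eq: "G_sub S x = mex (G_sub S ` {y. sub_move S x y})"
    unfolding G_sub_def by (rule grundy_unfold[OF wf_sub[OF assms]])
  show "sub_move S x y \<Longrightarrow> G_sub S y \<noteq> G_sub S x"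
  proof
    assume "sub_move S x y" "G_sub S y = G_sub S x"
    then have "G_sub S x \<in> G_sub S ` {y. sub_move S x y}" by (metis imageI mem_Collect_eq)
    then show False using mex_notin[OF finite_imageI[OF fin], of "G_sub S"] eq by metis
  qed
  show "v < G_sub S x \<Longrightarrow> \<exists>y. sub_move S x y \<and> G_sub S y = v"
    using mex_less[of v "G_sub S ` {y. sub_move S x y}"] eq by auto
qed

lemma nimsum_Cons: "nimsum (a # L) = a XOR nimsum L"
  by (simp add: nimsum_def)

lemma xor_cancel_left: "(a::nat) XOR (a XOR b) = b"
  by (simp flip: xor.assoc)

lemma nimsum_update:
  "i < length L \<Longrightarrow> nimsum (L[i := t]) = nimsum L XOR L ! i XOR t"
proof (induction L arbitrary: i)
  case Nil then show ?case by simp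
next
  case (Cons a L)
  show ?case
  proof (cases i)
    case 0 then show ?thesis
      by (simp add: nimsum_Cons xor.assoc xor_cancel_left xor.left_commute[of a] xor.commute)
  next
    case (Suc j) then show ?thesis using Cons
      by (simp add: nimsum_Cons xor.assoc)
  qed
qed

lemma bit_nimsum: "bit (nimsum L) k \<Longrightarrow> \<exists>x\<in>set L. bit x k"
  by (induction L) (auto simp: nimsum_def bit_xor_iff)

lemma less_by_bit:
  fixes x y :: nat
  assumes "x div 2 ^ Suc k = y div 2 ^ Suc k" "bit x k" "\<not> bit y k"
  shows "y < x"
proof -
  have m2: "\<And>z::nat. z mod 2 ^ Suc k = 2 ^ k * (z div 2 ^ k mod 2) + z mod 2 ^ k"
    by (simp only: power_Suc2 mod_mult2_eq)
  have dx: "x = x div 2 ^ Suc k * 2 ^ Suc k + 2 ^ k * (x div 2 ^ k mod 2) + x mod 2 ^ k"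
    using div_mult_mod_eq[of x "2 ^ Suc k"] m2[of x] by linarith
  have dy: "y = y div 2 ^ Suc k * 2 ^ Suc k + 2 ^ k * (y div 2 ^ k mod 2) + y mod 2 ^ k"
    using div_mult_mod_eq[of y "2 ^ Suc k"] m2[of y] by linarith
  have "x div 2 ^ k mod 2 = 1" "y div 2 ^ k mod 2 = 0"
    using assms(2,3) by (auto simp: bit_iff_odd odd_iff_mod_2_eq_one even_iff_mod_2_eq_zero)
  then have e1: "2 ^ k * (x div 2 ^ k mod 2) = (2::nat) ^ k" and e2: "2 ^ k * (y div 2 ^ k mod 2) = 0"
    by simp_all
  have e3: "y div 2 ^ Suc k * 2 ^ Suc k = x div 2 ^ Suc k * 2 ^ Suc k" using assms(1) by simp
  have "y mod 2 ^ k < 2 ^ k" by simp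
  then show ?thesis using dx dy e1 e2 e3 by linarith
qed

lemma nim_lemma:
  fixes v :: nat
  assumes "v < nimsum L"
  shows "\<exists>i < length L. (L ! i XOR nimsum L XOR v) < L ! i"
proof -
  define A where "A = nimsum L"
  define D where "D = A XOR v"
  have "D \<noteq> 0" using assms unfolding D_def A_def
    by (metis less_irrefl xor.commute xor.left_neutral xor.assoc xor_self_eq)
  then obtain k where k: "2 ^ k \<le> D" "D < 2 ^ Suc k"
    using ex_power_ivl1[of 2 D] by auto
  have "D div 2 ^ k \<ge> 1" using k by (simp add: div_greater_zero_iff Suc_le_eq)
  moreover have "D div 2 ^ k < 2" using k by (simp add: div_less_iff_less_mult mult.commute)
  ultimately have "D div 2 ^ k = 1" by linarith
  then have bD: "bit D k" by (simp add: bit_iff_odd)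
  have hD: "D div 2 ^ Suc k = 0" using k by simp
  have hi: "\<And>x. (x XOR D) div 2 ^ Suc k = x div 2 ^ Suc k"
    using hD by (metis drop_bit_eq_div drop_bit_xor xor.right_neutral)
  have bA: "bit A k"
  proof (rule ccontr)
    assume "\<not> bit A k"
    then have "bit v k" using bD by (simp add: D_def bit_xor_iff)
    moreover have "v = A XOR D" unfolding D_def
      by (metis xor.assoc xor.left_neutral xor_self_eq)
    ultimately have "A < v" using less_by_bit[of v k A] hi[of A] \<open>\<not> bit A k\<close> by simp
    then show False using assms A_def by simp
  qed
  then obtain x where x: "x \<in> set L" "bit x k" using bit_nimsum A_def by blast
  then obtain i where i: "i < length L" "L ! i = x" by (metis in_set_conv_nth)
  have "\<not> bit (x XOR D) k" using x bD by (simp add: bit_xor_iff)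
  then have "x XOR D < x" using less_by_bit[of x k "x XOR D"] hi[of x] x by simp
  then show ?thesis using i by (auto simp: D_def A_def xor.assoc)
qed


lemma wfrec_unique_acc:
  assumes "adm_wf R F" "x \<in> Wellfounded.acc R"
  shows "\<exists>!y. wfrec_rel R F x y"
  using assms(2)
proof (induct rule: acc_induct_rule)
  case (1 x)
  define f where "f y = (THE z. wfrec_rel R F y z)" for y
  from 1 have "\<And>y z. (y, x) \<in> R \<Longrightarrow> wfrec_rel R F y z \<longleftrightarrow> z = f y"
    unfolding f_def by (intro theI_unique) blast
  with \<open>adm_wf R F\<close> show ?case
    by (subst wfrec_rel.simps) (auto simp: adm_wf_def)
qed

lemma wfrec_acc:
  assumes "a \<in> Wellfounded.acc R"
  shows "wfrec R F a = F (cut (wfrec R F) R a) a"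
proof -
  have u: "\<And>z. z \<in> Wellfounded.acc R \<Longrightarrow> \<exists>!y. wfrec_rel R (\<lambda>f x. F (cut f R x) x) z y"
    by (rule wfrec_unique_acc[OF adm_lemma])
  show ?thesis
    unfolding wfrec_def
    apply (rule the1_equality[OF u[OF assms]])
    apply (rule wfrec_rel.wfrecI)
    apply (rule theI'[OF u])
    using acc_downward[OF assms] by blast
qed

lemma grundy_unfold_acc:
  assumes "p \<in> Wellfounded.acc {(q, p). M p q}"
  shows "grundy M p = mex (grundy M ` {q. M p q})"
proof -
  have "grundy M p = mex (cut (grundy M) {(q, p). M p q} p ` {q. M p q})"
    unfolding grundy_def by (subst wfrec_acc[OF assms]) simp
  also have "cut (grundy M) {(q, p). M p q} p ` {q. M p q} = grundy M ` {q. M p q}"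
    by (auto simp: cut_apply intro!: image_cong)
  finally show ?thesis .
qed

lemma sum_map2:
  "length ss = length xs \<Longrightarrow> \<forall>i<length xs. ss ! i \<le> xs ! i \<Longrightarrow>
   sum_list (map2 (-) xs ss) + sum_list ss = sum_list (xs::nat list)"
proof (induction xs arbitrary: ss)
  case Nil then show ?case by simp
next
  case (Cons x xs)
  then obtain s ss' where ss: "ss = s # ss'" by (cases ss) auto
  have "s \<le> x" using Cons.prems ss by force
  moreover have "sum_list (map2 (-) xs ss') + sum_list ss' = sum_list xs"
    using Cons.prems ss by (intro Cons.IH) auto
  ultimately show ?case using ss by simp
qed

lemma greedy:
  "d \<le> sum_list (map (\<lambda>x. x mod h) xs) \<Longrightarrow>
   \<exists>ss. length ss = length xs \<and> (\<forall>i<length xs. ss ! i \<le> xs ! i mod (h::nat)) \<and> sum_list ss = d"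
proof (induction xs arbitrary: d)
  case Nil then show ?case by simp
next
  case (Cons x xs)
  define s where "s = min d (x mod h)"
  have "d - s \<le> sum_list (map (\<lambda>x. x mod h) xs)" using Cons.prems by (simp add: s_def)
  then obtain ss where "length ss = length xs" "\<forall>i<length xs. ss ! i \<le> xs ! i mod h" "sum_list ss = d - s"
    using Cons.IH by blast
  then show ?case
    by (intro exI[of _ "s # ss"]) (auto simp: s_def nth_Cons split: nat.splits)
qed

lemma sum_mod_le: "sum_list xs mod h \<le> sum_list (map (\<lambda>x. x mod h) xs)" for h :: nat
proof (induction xs)
  case Nil then show ?case by simp
next
  case (Cons x xs)
  have "sum_list (x # xs) mod h = (x mod h + sum_list xs mod h) mod h" by (simp add: mod_add_eq)
  also have "\<dots> \<le> x mod h + sum_list xs mod h" by (rule mod_less_eq_dividend)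
  finally show ?case using Cons by simp
qed


lemma gcn_dec:
  assumes "\<forall>S \<in> set Ss. \<forall>s \<in> S. 0 < s" "length xs = length Ss" "gcn_move h Ss xs ys"
  shows "length ys = length Ss \<and> sum_list ys < sum_list xs"
proof -
  have len: "length ys = length xs" using assms(3) by (simp add: gcn_move_def)
  have "sum_list ys < sum_list xs"
  proof (cases "\<exists>i < length xs. \<exists>s \<in> Ss ! i. s \<le> xs ! i \<and> ys = xs[i := xs ! i - s]")
    case True
    then obtain i s where i: "i < length xs" "s \<in> Ss ! i" "s \<le> xs ! i" "ys = xs[i := xs ! i - s]"
      by blast
    have "s > 0" using assms(1,2) i by (metis nth_mem)
    moreover have "xs ! i \<le> sum_list xs" using i by (simp add: member_le_sum_list)
    ultimately show ?thesis using i by (auto simp: sum_list_update)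
  next
    case False
    then obtain ss where "length ss = length xs" "\<forall>i<length xs. ss ! i \<le> xs ! i"
            "0 < sum_list ss" "ys = map2 (-) xs ss"
      using assms(3) unfolding gcn_move_def by blast
    then show ?thesis using sum_map2[of ss xs] by auto
  qed
  then show ?thesis using len assms(2) by simp
qed

lemma qr_div: "r < h \<Longrightarrow> (q * h + r) div h = (q::nat)"
  by simp

lemma qr_mod: "r < h \<Longrightarrow> (q * h + r) mod h = (r::nat)"
  by simp

lemma sub_div_same: "s \<le> x mod h \<Longrightarrow> 0 < h \<Longrightarrow> (x - s) div h = (x::nat) div h"
proof -
  assume a: "s \<le> x mod h" "0 < h"
  have "x - s = x div h * h + (x mod h - s)" using div_mult_mod_eq[of x h] a by linarith
  moreover have "x mod h - s < h" using a by (meson le_less_trans diff_le_self mod_less_divisor)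
  ultimately show ?thesis by (metis qr_div)
qed

lemma mod_add_same_dvd:
  "(a + d) mod h = a mod h \<Longrightarrow> h dvd (d::nat)"
  by (metis le_add1 mod_eq_dvd_iff_nat add_diff_cancel_left')

lemma xor_eq_imp: "(n::nat) XOR a XOR t = n \<Longrightarrow> a = t"
  by (metis xor.assoc xor_cancel_left xor.right_neutral xor.commute)

theorem theorem2p1:
  fixes h :: nat and Ss :: "nat set list" and xs :: "nat list"
  assumes "0 < h"
    and "\<forall>S \<in> set Ss. \<forall>s \<in> S. 0 < s"
    and "\<forall>i < length Ss. \<exists>a :: nat \<Rightarrow> nat. \<forall>x r. r < h \<longrightarrow>
            G_sub (Ss ! i) (x * h + r) = a x * h + r"
    and "length xs = length Ss"
  shows "grundy (gcn_move h Ss) xs =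
           nimsum (map (\<lambda>i. G_sub (Ss ! i) (xs ! i) div h) [0..<length Ss]) * h
           + sum_list xs mod h"
proof -
  define n where "n = length Ss"
  define g where "g i x = G_sub (Ss ! i) x" for i x
  define M where "M = gcn_move h Ss"
  define N where "N ys = nimsum (map (\<lambda>i. g i (ys ! i) div h) [0..<n])" for ys
  define F where "F ys = N ys * h + sum_list ys mod h" for ys
  have hpos: "0 < h" by fact
  have pos: "\<And>i. i < n \<Longrightarrow> \<forall>s\<in>Ss ! i. 0 < s" using assms(2) n_def by (metis nth_mem)
  have gstr: "g i y div h = a (y div h) \<and> g i y mod h = y mod h"
    if "i < n" "\<forall>x r. r < h \<longrightarrow> g i (x * h + r) = a x * h + r" for i y a
  proof -
    have "g i y = a (y div h) * h + y mod h"
      using that(2)[rule_format, of "y mod h" "y div h"] hpos by simp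
    then show ?thesis using hpos by simp
  qed
  have gmod: "\<And>i y. i < n \<Longrightarrow> g i y mod h = y mod h"
    using gstr assms(3) unfolding n_def g_def by metis
  have gdiv: "\<And>i y z. i < n \<Longrightarrow> y div h = z div h \<Longrightarrow> g i y div h = g i z div h"
    using gstr assms(3) unfolding n_def g_def by metis
  have Fdiv: "F ys div h = N ys" and Fmod: "F ys mod h = sum_list ys mod h" for ys
    using hpos by (simp_all add: F_def)
  have dec: "\<And>ys zs. length ys = n \<Longrightarrow> M ys zs \<Longrightarrow> length zs = n \<and> sum_list zs < sum_list ys"
    using gcn_dec[OF assms(2)] unfolding M_def n_def by blast
  have acc: "ys \<in> Wellfounded.acc {(q, p). M p q}" if "length ys = n" for ys
  proof -
    have "\<forall>ys. length ys = n \<longrightarrow> sum_list ys = m \<longrightarrow> ys \<in> Wellfounded.acc {(q, p). M p q}" for m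
    proof (induction m rule: less_induct)
      case (less m)
      show ?case
      proof (intro allI impI)
        fix ys assume ys: "length ys = (n::nat)" "sum_list ys = m"
        show "ys \<in> Wellfounded.acc {(q, p). M p q}"
        proof (rule accI)
          fix zs assume "(zs, ys) \<in> {(q, p). M p q}"
          then have "length zs = n \<and> sum_list zs < sum_list ys" using dec ys by auto
          then show "zs \<in> Wellfounded.acc {(q, p). M p q}" using less ys by blast
        qed
      qed
    qed
    then show ?thesis using that by blast
  qed
  have main: "\<forall>ys. length ys = n \<longrightarrow> sum_list ys = m \<longrightarrow> grundy M ys = F ys" for m
  proof (induction m rule: less_induct)
    case (less m)
    show ?case
    proof (intro allI impI)
      fix ys assume ys: "length ys = n" "sum_list ys = m"
      have img: "grundy M ` {zs. M ys zs} = F ` {zs. M ys zs}"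
        using less dec ys by (intro image_cong) auto
      have "grundy M ys = mex (F ` {zs. M ys zs})"
        using grundy_unfold_acc[OF acc[OF ys(1)]] img by simp
      also have "\<dots> = F ys"
      proof (rule mex_eq)
        show "F ys \<notin> F ` {zs. M ys zs}"
        proof
          assume "F ys \<in> F ` {zs. M ys zs}"
          then obtain zs where mv: "M ys zs" and eq: "F zs = F ys" by auto
          have eqN: "N zs = N ys" using Fdiv eq by metis
          have eqS: "sum_list zs mod h = sum_list ys mod h" using Fmod eq by metis
          have mv': "gcn_move h Ss ys zs" using mv M_def by simp
          show False
          proof (cases "\<exists>i < length ys. \<exists>s \<in> Ss ! i. s \<le> ys ! i \<and> zs = ys[i := ys ! i - s]")
            case True
            then obtain i s where i: "i < n" "s \<in> Ss ! i" "s \<le> ys ! i" "zs = ys[i := ys ! i - s]"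
              using ys by blast
            define c where "c = ys ! i"
            define c' where "c' = c - s"
            have "ys ! i \<le> sum_list ys" using i ys(1) by (simp add: member_le_sum_list)
            then have "sum_list zs + s = sum_list ys" using i ys by (simp add: sum_list_update)
            then have "h dvd s" using eqS mod_add_same_dvd by metis
            have cc: "c = c' + s" using i c_def c'_def by simp
            have cm: "c' mod h = c mod h" unfolding cc using \<open>h dvd s\<close>
              by (metis add.right_neutral dvd_imp_mod_0 mod_add_right_eq)
            have sm: "sub_move (Ss ! i) c c'" using i c_def c'_def sub_move_def by auto
            have "g i c' \<noteq> g i c" using G_sub_props(1)[OF pos[OF i(1)] sm] g_def by simp
            moreover have "g i c' mod h = g i c mod h" using gmod[OF i(1)] cm by simp
            ultimately have ne: "g i c' div h \<noteq> g i c div h" by (metis div_mult_mod_eq)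
            have "map (\<lambda>j. g j (zs ! j) div h) [0..<n] = (map (\<lambda>j. g j (ys ! j) div h) [0..<n])[i := g i c' div h]"
              using i ys by (intro nth_equalityI) (auto simp: nth_list_update c'_def c_def)
            then have "N zs = N ys XOR (g i c div h) XOR (g i c' div h)"
              unfolding N_def using i by (simp add: nimsum_update c_def)
            then show False using eqN ne xor_eq_imp by metis
          next
            case False
            then obtain ss where ss: "length ss = length ys" "\<forall>i<length ys. ss ! i \<le> ys ! i"
              "0 < sum_list ss" "sum_list ss < h" "zs = map2 (-) ys ss"
              using mv' unfolding gcn_move_def by blast
            then have "sum_list zs + sum_list ss = sum_list ys" using sum_map2 by blast
            then have "h dvd sum_list ss" using eqS mod_add_same_dvd by metis
            then show False using ss by (meson dvd_imp_le not_le)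
          qed
        qed
      next
        fix v assume vlt: "v < F ys"
        define A where "A = N ys"
        define B where "B = sum_list ys mod h"
        define L where "L = map (\<lambda>j. g j (ys ! j) div h) [0..<n]"
        have AL: "A = nimsum L" unfolding A_def N_def L_def ..
        have Blt: "B < h" using hpos B_def by simp
        have Fys: "F ys = A * h + B" unfolding F_def A_def B_def ..
        have vdm: "v = v div h * h + v mod h" by simp
        have vmlt: "v mod h < h" using hpos by simp
        have "v < (A + 1) * h" using vlt Fys Blt by simp
        then have "v div h < A + 1" using hpos by (simp add: div_less_iff_less_mult)
        then consider "v div h = A" | "v div h < A" by linarith
        then show "v \<in> F ` {zs. M ys zs}"
        proof cases
          case 1
          have "v = A * h + v mod h" using 1 vdm by simp
          then have "v mod h < B" using vlt Fys by linarith
          define d where "d = B - v mod h"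
          have "d \<le> sum_list (map (\<lambda>x. x mod h) ys)"
            using sum_mod_le[of ys h] unfolding d_def B_def by linarith
          then obtain ss where ss: "length ss = length ys" "\<forall>i<length ys. ss ! i \<le> ys ! i mod h"
            "sum_list ss = d" using greedy by blast
          define zs where "zs = map2 (-) ys ss"
          have ssle: "\<forall>i<length ys. ss ! i \<le> ys ! i"
            using ss(2) by (meson le_trans mod_less_eq_dividend)
          have "M ys zs" unfolding M_def gcn_move_def zs_def
            using ss ssle \<open>v mod h < B\<close> Blt by (auto simp: d_def)
          have "N zs = N ys" unfolding N_def
          proof (rule arg_cong[where f = nimsum], rule map_cong[OF refl])
            fix j assume "j \<in> set [0..<n]"
            then have j: "j < n" by simp
            have "zs ! j = ys ! j - ss ! j" using j ys ss unfolding zs_def by simp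
            then have "zs ! j div h = ys ! j div h" using sub_div_same ss(2) j ys hpos by simp
            then show "g j (zs ! j) div h = g j (ys ! j) div h" using gdiv j by blast
          qed
          have "sum_list zs + d = sum_list ys" using sum_map2[of ss ys] ss ssle zs_def by simp
          moreover have "sum_list ys = sum_list ys div h * h + B" unfolding B_def by simp
          ultimately have "sum_list zs = sum_list ys div h * h + v mod h"
            using \<open>v mod h < B\<close> d_def by linarith
          then have "sum_list zs mod h = v mod h" using vmlt qr_mod by metis
          then have "F zs = v" unfolding F_def using \<open>N zs = N ys\<close> 1 A_def vdm by simp
          then show ?thesis using \<open>M ys zs\<close> by blast
        next
          case 2
          then have "v div h < nimsum L" using AL by simp
          from nim_lemma[OF this] obtain i where i: "i < length L"
            and tlt: "(L ! i XOR nimsum L XOR v div h) < L ! i" by blast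
          define t where "t = L ! i XOR nimsum L XOR v div h"
          have iL: "i < n" using i L_def by simp
          define c where "c = ys ! i"
          have Li: "L ! i = g i c div h" using iL unfolding L_def c_def by simp
          define R where "R = (sum_list ys - c) mod h"
          define r' where "r' = (v mod h + h - R) mod h"
          have r'lt: "r' < h" using hpos r'_def by simp
          define w where "w = t * h + r'"
          have "w < (t + 1) * h" using r'lt w_def by simp
          also have "\<dots> \<le> (g i c div h) * h" using tlt t_def Li by (intro mult_le_mono1) simp
          also have "\<dots> \<le> g i c" by (metis div_mult_mod_eq le_add1)
          finally have "w < G_sub (Ss ! i) c" unfolding g_def .
          from G_sub_props(2)[OF pos[OF iL] this] obtain y where
            sm: "sub_move (Ss ! i) c y" and gy: "G_sub (Ss ! i) y = w" by blast
          obtain s where s: "s \<in> Ss ! i" "s \<le> c" "y = c - s" using sm sub_move_def by auto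
          define zs where "zs = ys[i := y]"
          have "M ys zs" unfolding M_def gcn_move_def zs_def
            using iL ys s c_def by auto
          have gyd: "g i y div h = t" using gy r'lt qr_div unfolding g_def w_def by metis
          have ymod: "y mod h = r'" using gmod[OF iL, of y] gy r'lt qr_mod unfolding g_def w_def by metis
          have "map (\<lambda>j. g j (zs ! j) div h) [0..<n] = L[i := t]"
            using iL ys gyd by (intro nth_equalityI) (auto simp: nth_list_update zs_def L_def)
          then have "N zs = nimsum L XOR L ! i XOR t"
            unfolding N_def using i by (simp add: nimsum_update)
          also have "\<dots> = v div h" unfolding t_def by (simp add: xor_cancel_left)
          finally have Nz: "N zs = v div h" .
          have cle: "c \<le> sum_list ys" using iL ys(1) c_def by (simp add: member_le_sum_list)
          have "sum_list zs = (sum_list ys - c) + y"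
            using iL ys(1) cle s unfolding zs_def c_def by (simp add: sum_list_update)
          then have "sum_list zs mod h = (R + r') mod h"
            unfolding R_def using ymod by (metis mod_add_eq)
          also have "\<dots> = (R + (v mod h + h - R)) mod h" unfolding r'_def by (simp add: mod_add_right_eq)
          also have "\<dots> = (v mod h + h) mod h"
          proof -
            have "R < h" using hpos R_def by simp
            then have "R + (v mod h + h - R) = v mod h + h" by linarith
            then show ?thesis by simp
          qed
          also have "\<dots> = v mod h" by simp
          finally have "F zs = v" unfolding F_def using Nz vdm by simp
          then show ?thesis using \<open>M ys zs\<close> by blast
        qed
      qed
      finally show "grundy M ys = F ys" .
    qed
  qed
  show ?thesis using main assms(4) unfolding M_def F_def N_def g_def n_def by blast
qed

end
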